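(* No monoid admitting a non-trivial idempotent (an element $e$ with $e^2=e\neq 1_M$) is strongly sofic.
   Context: Hamming metric on $\operatorname{Map}(D)$ (monoid of maps $D\to D$, $D$ finite non-empty): $d_D^{\mathrm{Ham}}(f,g)=\frac{1}{|D|}|\{v:f(v)\ne g(v)\}|$. A monoid $M$ is strongly sofic if for every finite $K\subset M$ there is an integer $\Delta_K\ge1$ such that for every $\varepsilon>0$ there exist a non-empty finite set $D$ and a map $\sigma\colon M\to\operatorname{Map}(D)$ with (1) $\sigma(1_M)=\mathrm{Id}_D$; (2) $d_D^{\mathrm{Ham}}(\sigma(k_1k_2),\sigma(k_1)\sigma(k_2))\le\varepsilon$ for $k_1,k_2\in K$; (3) $d_D^{\mathrm{Ham}}(\sigma(k_1),\sigma(k_2))\ge1-\varepsilon$ for distinct $k_1,k_2\in K$; (4) $|\sigma(k)^{-1}(v)|\le\Delta_K$ for $k\in K$, $v\in D$. *)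

theory Defs
  imports Complex_Main
begin

text \<open>Normalized Hamming distance on maps D -> D (maps represented as functions
  nat => nat, only their values on the finite set D matter).\<close>
definition ham_dist :: "nat set \<Rightarrow> (nat \<Rightarrow> nat) \<Rightarrow> (nat \<Rightarrow> nat) \<Rightarrow> real" where
  "ham_dist D f g = real (card {v \<in> D. f v \<noteq> g v}) / real (card D)"

definition strongly_sofic :: "'a::monoid_mult itself \<Rightarrow> bool" where
  "strongly_sofic _ \<longleftrightarrow>
    (\<forall>K :: 'a set. finite K \<longrightarrow>
      (\<exists>\<Delta> :: nat. \<Delta> \<ge> 1 \<and>
        (\<forall>\<epsilon> :: real. \<epsilon> > 0 \<longrightarrow>
          (\<exists>(D :: nat set) (\<sigma> :: 'a \<Rightarrow> nat \<Rightarrow> nat).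
             finite D \<and> D \<noteq> {} \<and>
             (\<forall>m. \<forall>v\<in>D. \<sigma> m v \<in> D) \<and>
             (\<forall>v\<in>D. \<sigma> 1 v = v) \<and>
             (\<forall>k1\<in>K. \<forall>k2\<in>K. ham_dist D (\<sigma> (k1 * k2)) (\<sigma> k1 \<circ> \<sigma> k2) \<le> \<epsilon>) \<and>
             (\<forall>k1\<in>K. \<forall>k2\<in>K. k1 \<noteq> k2 \<longrightarrow> ham_dist D (\<sigma> k1) (\<sigma> k2) \<ge> 1 - \<epsilon>) \<and>
             (\<forall>k\<in>K. \<forall>v\<in>D. card {w \<in> D. \<sigma> k w = v} \<le> \<Delta>)))))"

end

theory Submission
  imports Defs
begin

theorem proposition3p14:
  fixes e :: "'a::monoid_mult"
  assumes "e * e = e" and "e \<noteq> 1"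
  shows "\<not> strongly_sofic TYPE('a)"
proof
  assume S: "strongly_sofic TYPE('a)"
  have fK: "finite {1::'a,e}" by simp
  have S0: "\<exists>\<Delta> :: nat. \<Delta> \<ge> 1 \<and>
        (\<forall>\<epsilon> :: real. \<epsilon> > 0 \<longrightarrow>
          (\<exists>(D :: nat set) (\<sigma> :: 'a \<Rightarrow> nat \<Rightarrow> nat).
             finite D \<and> D \<noteq> {} \<and>
             (\<forall>m. \<forall>v\<in>D. \<sigma> m v \<in> D) \<and>
             (\<forall>v\<in>D. \<sigma> 1 v = v) \<and>
             (\<forall>k1\<in>{1,e}. \<forall>k2\<in>{1,e}. ham_dist D (\<sigma> (k1 * k2)) (\<sigma> k1 \<circ> \<sigma> k2) \<le> \<epsilon>) \<and>
             (\<forall>k1\<in>{1,e}. \<forall>k2\<in>{1,e}. k1 \<noteq> k2 \<longrightarrow> ham_dist D (\<sigma> k1) (\<sigma> k2) \<ge> 1 - \<epsilon>) \<and>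
             (\<forall>k\<in>{1,e}. \<forall>v\<in>D. card {w \<in> D. \<sigma> k w = v} \<le> \<Delta>)))"
    using S[unfolded strongly_sofic_def, rule_format, OF fK] .
  then obtain \<Delta> :: nat where d1: "\<Delta> \<ge> 1" and H: "\<forall>\<epsilon> :: real. \<epsilon> > 0 \<longrightarrow>
          (\<exists>(D :: nat set) (\<sigma> :: 'a \<Rightarrow> nat \<Rightarrow> nat).
             finite D \<and> D \<noteq> {} \<and>
             (\<forall>m. \<forall>v\<in>D. \<sigma> m v \<in> D) \<and>
             (\<forall>v\<in>D. \<sigma> 1 v = v) \<and>
             (\<forall>k1\<in>{1,e}. \<forall>k2\<in>{1,e}. ham_dist D (\<sigma> (k1 * k2)) (\<sigma> k1 \<circ> \<sigma> k2) \<le> \<epsilon>) \<and>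
             (\<forall>k1\<in>{1,e}. \<forall>k2\<in>{1,e}. k1 \<noteq> k2 \<longrightarrow> ham_dist D (\<sigma> k1) (\<sigma> k2) \<ge> 1 - \<epsilon>) \<and>
             (\<forall>k\<in>{1,e}. \<forall>v\<in>D. card {w \<in> D. \<sigma> k w = v} \<le> \<Delta>))"
    by (elim exE conjE) blast
  define \<epsilon> :: real where "\<epsilon> = 1 / (2 * real \<Delta> + 2)"
  have ep: "\<epsilon> > 0" unfolding \<epsilon>_def by simp
  obtain D :: "nat set" and \<sigma> :: "'a \<Rightarrow> nat \<Rightarrow> nat" where
    fD: "finite D" and ne: "D \<noteq> {}" and cl: "\<forall>m. \<forall>v\<in>D. \<sigma> m v \<in> D"
    and id1: "\<forall>v\<in>D. \<sigma> 1 v = v"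
    and c2: "\<forall>k1\<in>{1,e}. \<forall>k2\<in>{1,e}. ham_dist D (\<sigma> (k1 * k2)) (\<sigma> k1 \<circ> \<sigma> k2) \<le> \<epsilon>"
    and c3: "\<forall>k1\<in>{1,e}. \<forall>k2\<in>{1,e}. k1 \<noteq> k2 \<longrightarrow> ham_dist D (\<sigma> k1) (\<sigma> k2) \<ge> 1 - \<epsilon>"
    and c4: "\<forall>k\<in>{1,e}. \<forall>v\<in>D. card {w \<in> D. \<sigma> k w = v} \<le> \<Delta>"
    using H[rule_format, OF ep] by (elim exE conjE) blast
  define f where "f = \<sigma> e"
  define n where "n = card D"
  have npos: "real n > 0" using fD ne n_def by (simp add: card_gt_0_iff)
  define A where "A = {v\<in>D. f v = f (f v)}"
  define A' where "A' = {v\<in>D. f v \<noteq> f (f v)}"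
  define F where "F = {v\<in>D. f v = v}"
  define B where "B = {v\<in>D. v \<noteq> f v}"
  have "ham_dist D (\<sigma> (e * e)) (\<sigma> e \<circ> \<sigma> e) \<le> \<epsilon>" using c2 by (metis insertI2 singletonI)
  hence hA': "real (card A') \<le> \<epsilon> * real n"
    using npos assms(1) unfolding ham_dist_def A'_def f_def n_def
    by (simp add: divide_le_eq mult.commute)
  have "ham_dist D (\<sigma> 1) (\<sigma> e) \<ge> 1 - \<epsilon>" using c3 assms(2) by (metis insertI1 insertI2 singletonI)
  moreover have "{v\<in>D. \<sigma> 1 v \<noteq> \<sigma> e v} = B" using id1 unfolding B_def f_def by auto
  ultimately have hB: "real (card B) \<ge> (1 - \<epsilon>) * real n"
    using npos unfolding ham_dist_def n_def by (simp add: le_divide_eq)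
  have "card F + card B = n"
    unfolding n_def F_def B_def using fD
    by (subst card_Un_disjoint[symmetric]) (auto intro: arg_cong[where f=card])
  hence hF: "real (card F) \<le> \<epsilon> * real n" using hB by (simp add: algebra_simps)
  have "card A + card A' = n"
    unfolding n_def A_def A'_def using fD
    by (subst card_Un_disjoint[symmetric]) (auto intro: arg_cong[where f=card])
  hence hA: "real (card A) \<ge> (1 - \<epsilon>) * real n" using hA' by (simp add: algebra_simps)
  have sub: "A \<subseteq> (\<Union>w\<in>F. {u\<in>D. f u = w})"
  proof
    fix v assume v: "v \<in> A"
    hence "f v \<in> F" unfolding A_def F_def f_def using cl by auto
    thus "v \<in> (\<Union>w\<in>F. {u\<in>D. f u = w})" using v unfolding A_def by auto
  qed
  have "card A \<le> card (\<Union>w\<in>F. {u\<in>D. f u = w})"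
  proof (rule card_mono)
    show "finite (\<Union>w\<in>F. {u\<in>D. f u = w})" using fD by (rule finite_subset[rotated]) auto
  qed (rule sub)
  also have "\<dots> \<le> (\<Sum>w\<in>F. card {u\<in>D. f u = w})"
    by (rule card_UN_le) (simp add: F_def fD)
  also have "\<dots> \<le> (\<Sum>w\<in>F. \<Delta>)"
    by (rule sum_mono) (use c4 in \<open>auto simp: F_def f_def\<close>)
  also have "\<dots> = \<Delta> * card F" by simp
  finally have "real (card A) \<le> real \<Delta> * real (card F)" by (simp flip: of_nat_mult)
  also have "\<dots> \<le> real \<Delta> * (\<epsilon> * real n)" using hF by (simp add: mult_left_mono)
  finally have "(1 - \<epsilon>) * real n \<le> real \<Delta> * \<epsilon> * real n" using hA by simp
  hence "1 - \<epsilon> \<le> real \<Delta> * \<epsilon>" using npos by simp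
  moreover have "real \<Delta> * \<epsilon> < 1/2" unfolding \<epsilon>_def by (simp add: field_simps)
  moreover have "\<epsilon> \<le> 1/4" unfolding \<epsilon>_def using d1 by (simp add: field_simps)
  ultimately show False by linarith
qed

end
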